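(* There are constants $c,\beta\ge 0$ such that for all sufficiently large $n$ and every integer $k>\frac{4}{7}n+c$, the pair $(n,k)$ is $(2,\beta)$-approx good.
   Context: All graphs are undirected and unweighted. For a graph $G=(V,E)$ and integer $k$, a $k$-spanner of $G$ is a subgraph $H=(V,E')$, $E'\subseteq E$, with $\mathrm{dist}_H(u,v)\le k\cdot\mathrm{dist}_G(u,v)$ for all $u,v\in V$. Girth = length of a shortest cycle ($+\infty$ if acyclic). For constants $\alpha>1,\beta\ge 0$, a pair $(n,k)$ is $(\alpha,\beta)$-approx good if every connected $n$-vertex graph $G$ has a $k$-spanner $H=(V,E_H)$ with girth at least $k+2$ such that $|E_H|-n\le \alpha(\mathsf{OPT}-n)+\beta$, where $\mathsf{OPT}$ is the number of edges of a minimum (fewest-edge) $k$-spanner of $G$. *)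

theory Defs
  imports Main "HOL-Library.Extended_Nat"
begin

definition simple_graph :: "nat set \<Rightarrow> nat set set \<Rightarrow> bool" where
  "simple_graph V E \<longleftrightarrow> (\<forall>e\<in>E. \<exists>u v. e = {u, v} \<and> u \<noteq> v \<and> u \<in> V \<and> v \<in> V)"

definition walk :: "nat set set \<Rightarrow> nat list \<Rightarrow> bool" where
  "walk E xs \<longleftrightarrow> xs \<noteq> [] \<and> (\<forall>i. i + 1 < length xs \<longrightarrow> {xs ! i, xs ! (i + 1)} \<in> E)"

definition gdist :: "nat set set \<Rightarrow> nat \<Rightarrow> nat \<Rightarrow> enat" where
  "gdist E u v = Inf {enat (length xs - 1) | xs. walk E xs \<and> hd xs = u \<and> last xs = v}"

definition connected_graph :: "nat set \<Rightarrow> nat set set \<Rightarrow> bool" where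
  "connected_graph V E \<longleftrightarrow> simple_graph V E \<and> (\<forall>u\<in>V. \<forall>v\<in>V. gdist E u v < \<infinity>)"

definition is_cycle :: "nat set set \<Rightarrow> nat list \<Rightarrow> bool" where
  "is_cycle E xs \<longleftrightarrow> walk E xs \<and> distinct xs \<and> length xs \<ge> 3 \<and> {last xs, hd xs} \<in> E"

definition girth :: "nat set set \<Rightarrow> enat" where
  "girth E = Inf {enat (length xs) | xs. is_cycle E xs}"

definition is_spanner :: "nat set \<Rightarrow> nat set set \<Rightarrow> nat \<Rightarrow> nat set set \<Rightarrow> bool" where
  "is_spanner V E k H \<longleftrightarrow> H \<subseteq> E \<and>
     (\<forall>u\<in>V. \<forall>v\<in>V. gdist H u v \<le> enat k * gdist E u v)"

definition OPT :: "nat set \<Rightarrow> nat set set \<Rightarrow> nat \<Rightarrow> nat" where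
  "OPT V E k = Min (card ` {H. is_spanner V E k H})"

definition approx_good :: "real \<Rightarrow> real \<Rightarrow> nat \<Rightarrow> nat \<Rightarrow> bool" where
  "approx_good \<alpha> \<beta> n k \<longleftrightarrow>
     (\<forall>E. connected_graph {0..<n} E \<longrightarrow>
        (\<exists>H. is_spanner {0..<n} E k H \<and> enat (k + 2) \<le> girth H \<and>
             real (card H) - real n \<le> \<alpha> * (real (OPT {0..<n} E k) - real n) + \<beta>))"

end

theory Submission
  imports Defs
begin


lemma walk_single[simp]: "walk E [x]" by (simp add: walk_def)

lemma walk_Cons2[simp]: "walk E (x # y # ys) \<longleftrightarrow> {x,y} \<in> E \<and> walk E (y # ys)"
proof
  assume "walk E (x # y # ys)"
  then show "{x,y} \<in> E \<and> walk E (y # ys)" unfolding walk_def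
    by (metis Suc_eq_plus1 add_0 length_Cons list.distinct(1) not_less_eq nth_Cons_0 nth_Cons_Suc zero_less_Suc)
next
  assume a: "{x,y} \<in> E \<and> walk E (y # ys)"
  show "walk E (x # y # ys)" unfolding walk_def
  proof (intro conjI allI impI)
    fix i assume "i + 1 < length (x # y # ys)"
    then show "{(x # y # ys) ! i, (x # y # ys) ! (i + 1)} \<in> E"
      using a unfolding walk_def by (cases i) auto
  qed simp
qed

lemma walk_ConsD: "walk E (x # ys) \<Longrightarrow> ys \<noteq> [] \<Longrightarrow> walk E ys"
  by (cases ys) auto

lemma walk_append: "walk E xs \<Longrightarrow> walk E ys \<Longrightarrow> last xs = hd ys \<Longrightarrow> walk E (xs @ tl ys)"
proof (induction xs)
  case Nil then show ?case by (simp add: walk_def)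
next
  case (Cons x xs)
  show ?case
  proof (cases xs)
    case Nil then show ?thesis using Cons.prems by (cases ys) auto
  next
    case (Cons y zs)
    then show ?thesis using Cons.prems Cons.IH by auto
  qed
qed

lemma walk_mono: "walk E xs \<Longrightarrow> E \<subseteq> F \<Longrightarrow> walk F xs"
  unfolding walk_def by blast

lemma walk_rev:
  assumes w0: "walk E xs" shows "walk E (rev xs)"
  unfolding walk_def
proof (intro conjI allI impI)
  have w: "xs \<noteq> [] \<and> (\<forall>i. i + 1 < length xs \<longrightarrow> {xs ! i, xs ! (i + 1)} \<in> E)"
    using w0 by (simp add: walk_def)
  then show "rev xs \<noteq> []" by simp
  fix i assume i: "i + 1 < length (rev xs)"
  define j where "j = length xs - 2 - i"
  have "{xs ! j, xs ! (j + 1)} \<in> E" using w i j_def by auto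
  moreover have "rev xs ! i = xs ! (j+1)" "rev xs ! (i+1) = xs ! j"
    using i j_def by (auto simp: rev_nth Suc_diff_Suc)
  ultimately show "{rev xs ! i, rev xs ! (i + 1)} \<in> E" by (simp add: insert_commute)
qed

lemma gdist_le: "walk E xs \<Longrightarrow> gdist E (hd xs) (last xs) \<le> enat (length xs - 1)"
  unfolding gdist_def by (rule Inf_lower) blast

lemma gdist_obtain:
  assumes "gdist E u v = enat d"
  shows "\<exists>xs. walk E xs \<and> hd xs = u \<and> last xs = v \<and> length xs - 1 = d"
proof -
  let ?S = "{enat (length xs - 1) | xs. walk E xs \<and> hd xs = u \<and> last xs = v}"
  have ne: "?S \<noteq> {}" using assms unfolding gdist_def by (metis Inf_empty enat.distinct(1) top_enat_def)
  then have "Inf ?S \<in> ?S" unfolding Inf_enat_def by (auto intro: LeastI)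
  then show ?thesis using assms unfolding gdist_def by auto
qed

lemma gdist_fin: "gdist E u v < \<infinity> \<Longrightarrow> \<exists>d. gdist E u v = enat d"
  by (cases "gdist E u v") auto

lemma gdist_sym: "gdist E u v \<le> gdist E v u"
proof (cases "gdist E v u")
  case (enat d)
  then obtain xs where "walk E xs" "hd xs = v" "last xs = u" "length xs - 1 = d"
    using gdist_obtain by blast
  then show ?thesis using gdist_le[of E "rev xs"] walk_rev[of E xs] enat
    by (simp add: hd_rev last_rev walk_def)
qed simp



lemma walk_lift:
  assumes "walk E xs" "\<And>u v. {u,v} \<in> E \<Longrightarrow> gdist H u v \<le> enat k"
  shows "\<exists>ys. walk H ys \<and> hd ys = hd xs \<and> last ys = last xs \<and> length ys - 1 \<le> k * (length xs - 1)"
  using assms(1)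
proof (induction xs)
  case Nil then show ?case by (simp add: walk_def)
next
  case (Cons x xs)
  show ?case
  proof (cases xs)
    case Nil then show ?thesis by (intro exI[of _ "[x]"]) auto
  next
    case (Cons y zs)
    with Cons.prems have e: "{x,y} \<in> E" and w: "walk E xs" by auto
    from Cons.IH[OF w] obtain ys where ys: "walk H ys" "hd ys = hd xs" "last ys = last xs"
      "length ys - 1 \<le> k * (length xs - 1)" by blast
    have "gdist H x y \<le> enat k" using assms(2) e by blast
    then obtain d where d: "gdist H x y = enat d" "d \<le> k"
      by (cases "gdist H x y") auto
    from gdist_obtain[OF d(1)] obtain zs' where zs: "walk H zs'" "hd zs' = x" "last zs' = y" "length zs' - 1 = d"
      by blast
    have w2: "walk H (zs' @ tl ys)" using walk_append[OF zs(1) ys(1)] zs ys Cons by simp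
    have ne: "zs' \<noteq> []" "ys \<noteq> []" using zs(1) ys(1) by (auto simp: walk_def)
    have "length (zs' @ tl ys) - 1 = (length zs' - 1) + (length ys - 1)" using ne
      by (cases zs'; cases ys) auto
    also have "\<dots> \<le> k + k * (length xs - 1)" using d zs ys by simp
    also have "\<dots> = k * (length (x # xs) - 1)" using Cons by (simp add: algebra_simps)
    have hy: "hd ys = y" using ys(2) Cons by simp
    moreover have "last (zs' @ tl ys) = last ys"
      using ne ys zs hy by (cases ys) (auto simp: last_append)
    ultimately show ?thesis using w2 ne zs ys Cons
      by (intro exI[of _ "zs' @ tl ys"]) (auto simp: hd_append)
  qed
qed

lemma spanner_crit:
  assumes "H \<subseteq> E" "k \<ge> 1" "\<And>u v. {u,v} \<in> E \<Longrightarrow> gdist H u v \<le> enat k"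
  shows "is_spanner V E k H"
  unfolding is_spanner_def
proof (intro conjI ballI)
  fix u v
  show "gdist H u v \<le> enat k * gdist E u v"
  proof (cases "gdist E u v")
    case (enat d)
    from gdist_obtain[OF this] obtain xs where xs: "walk E xs" "hd xs = u" "last xs = v" "length xs - 1 = d"
      by blast
    from walk_lift[OF xs(1) assms(3)] obtain ys where ys: "walk H ys" "hd ys = u" "last ys = v"
      "length ys - 1 \<le> k * d" using xs by auto
    have "gdist H u v \<le> enat (length ys - 1)" using gdist_le[OF ys(1)] ys by simp
    also have "\<dots> \<le> enat (k * d)" using ys by simp
    finally show ?thesis using enat by simp
  next
    case infinity then show ?thesis using assms(2) by (simp add: imult_is_infinity)
  qed
qed (use assms in auto)

lemma cycle_mod:
  "is_cycle F xs \<longleftrightarrow> distinct xs \<and> length xs \<ge> 3 \<and>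
     (\<forall>i<length xs. {xs ! i, xs ! (Suc i mod length xs)} \<in> F)"
proof
  assume c: "is_cycle F xs"
  then have w: "\<forall>i. i + 1 < length xs \<longrightarrow> {xs ! i, xs ! (i + 1)} \<in> F" and l: "length xs \<ge> 3"
    and wr: "{last xs, hd xs} \<in> F" and d: "distinct xs"
    unfolding is_cycle_def walk_def by auto
  have "\<forall>i<length xs. {xs ! i, xs ! (Suc i mod length xs)} \<in> F"
  proof (intro allI impI)
    fix i assume i: "i < length xs"
    show "{xs ! i, xs ! (Suc i mod length xs)} \<in> F"
    proof (cases "Suc i < length xs")
      case True then show ?thesis using w by simp
    next
      case False
      then have "Suc i = length xs" using i by simp
      then have "i = length xs - 1" "Suc i mod length xs = 0" by simp_all
      moreover have "xs \<noteq> []" using l by auto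
      then have "xs ! 0 = hd xs" "xs ! (length xs - 1) = last xs"
        by (simp_all add: last_conv_nth hd_conv_nth)
      ultimately show ?thesis using wr by (simp add: insert_commute)
    qed
  qed
  then show "distinct xs \<and> length xs \<ge> 3 \<and> (\<forall>i<length xs. {xs ! i, xs ! (Suc i mod length xs)} \<in> F)"
    using d l by simp
next
  assume a: "distinct xs \<and> length xs \<ge> 3 \<and> (\<forall>i<length xs. {xs ! i, xs ! (Suc i mod length xs)} \<in> F)"
  then have ne: "xs \<noteq> []" by auto
  have "walk F xs" unfolding walk_def
  proof (intro conjI allI impI)
    fix i assume "i + 1 < length xs"
    then show "{xs ! i, xs ! (i + 1)} \<in> F" using a by (metis Suc_eq_plus1 Suc_lessD mod_less)
  qed (use ne in simp)
  moreover have "{last xs, hd xs} \<in> F"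
  proof -
    have "length xs - 1 < length xs" using ne by simp
    then have "{xs ! (length xs - 1), xs ! (Suc (length xs - 1) mod length xs)} \<in> F" using a by blast
    then show ?thesis using ne by (simp add: last_conv_nth hd_conv_nth)
  qed
  ultimately show "is_cycle F xs" using a unfolding is_cycle_def by simp
qed

lemma cyc_edge_inj:
  assumes "distinct xs" "length xs \<ge> 3" "a < length xs" "b < length xs"
    "{xs ! a, xs ! (Suc a mod length xs)} = {xs ! b, xs ! (Suc b mod length xs)}"
  shows "a = b"
proof (rule ccontr)
  assume ab: "a \<noteq> b"
  let ?n = "length xs"
  have npos: "0 < ?n" using assms(2) by linarith
  have sa: "Suc a mod ?n < ?n" "Suc b mod ?n < ?n" using npos by simp_all
  have "xs ! a \<noteq> xs ! b" using ab assms by (simp add: nth_eq_iff_index_eq)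
  then have "xs ! a = xs ! (Suc b mod ?n) \<and> xs ! (Suc a mod ?n) = xs ! b"
    using assms(5) by (auto simp: doubleton_eq_iff)
  then have "a = Suc b mod ?n" "Suc a mod ?n = b"
    using assms sa by (auto simp: nth_eq_iff_index_eq)
  then show False using assms ab by (auto simp: mod_Suc split: if_splits)
qed

lemma cycle_extract:
  assumes c: "is_cycle (insert e H) xs" and nc: "\<not> is_cycle H xs"
  shows "\<exists>ys. walk H ys \<and> {hd ys, last ys} = e \<and> length ys = length xs"
proof -
  let ?n = "length xs"
  have cm: "distinct xs" "?n \<ge> 3" "\<forall>i<?n. {xs ! i, xs ! (Suc i mod ?n)} \<in> insert e H"
    using c cycle_mod by auto
  obtain i where i: "i < ?n" "{xs ! i, xs ! (Suc i mod ?n)} = e"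
    using cm nc cycle_mod[of H xs] by auto
  define ys where "ys = rotate (Suc i) xs"
  have ly: "length ys = ?n" by (simp add: ys_def)
  have ny: "\<And>j. j < ?n \<Longrightarrow> ys ! j = xs ! ((Suc i + j) mod ?n)"
    unfolding ys_def using nth_rotate by blast
  have ne: "ys \<noteq> []" using ly cm by auto
  have xne: "xs \<noteq> []" using cm by auto
  have hd: "hd ys = xs ! (Suc i mod ?n)" using ny[of 0] cm ne xne by (simp add: hd_conv_nth)
  have "last ys = ys ! (?n - 1)" using ly ne by (simp add: last_conv_nth)
  also have "\<dots> = xs ! ((Suc i + (?n - 1)) mod ?n)" using ny cm by simp
  also have "(Suc i + (?n - 1)) = i + ?n" using cm by simp
  finally have lst: "last ys = xs ! i" using i by simp
  have "walk H ys" unfolding walk_def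
  proof (intro conjI allI impI)
    show "ys \<noteq> []" by fact
    fix j assume j: "j + 1 < length ys"
    define m where "m = (Suc i + j) mod ?n"
    have "0 < ?n" using cm(2) by linarith
    then have m: "m < ?n" using m_def by simp
    have "Suc m mod ?n = (Suc i + (j+1)) mod ?n" unfolding m_def by (simp add: mod_Suc_eq)
    then have eq: "{ys ! j, ys ! (j + 1)} = {xs ! m, xs ! (Suc m mod ?n)}"
      using ny j ly m_def by simp
    have "m \<noteq> i"
    proof
      assume "m = i"
      then have "(Suc i + j) mod ?n = i" by (simp add: m_def)
      moreover have "(Suc i + j) mod ?n = (if Suc i + j < ?n then Suc i + j else Suc i + j - ?n)"
        using i j ly by (simp add: mod_if)
      ultimately show False using j ly by (auto split: if_splits)
    qed
    then have "{xs ! m, xs ! (Suc m mod ?n)} \<noteq> e"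
      using cyc_edge_inj[OF cm(1) cm(2) m i(1)] i(2) by auto
    then show "{ys ! j, ys ! (j + 1)} \<in> H" using eq cm(3) m by auto
  qed
  then show ?thesis using hd lst i ly by (intro exI[of _ ys]) (auto simp: insert_commute)
qed



definition deg :: "nat set set \<Rightarrow> nat \<Rightarrow> nat" where
  "deg F v = card {e\<in>F. v \<in> e}"

definition sd :: "'a set \<Rightarrow> 'a set \<Rightarrow> 'a set" where
  "sd A B = (A - B) \<union> (B - A)"

lemma deg_empty[simp]: "deg {} v = 0" by (simp add: deg_def)

lemma deg_insert: "finite F \<Longrightarrow> e \<notin> F \<Longrightarrow> deg (insert e F) v = deg F v + (if v \<in> e then 1 else 0)"
proof -
  assume f: "finite F" and e: "e \<notin> F"
  show ?thesis
  proof (cases "v \<in> e")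
    case True
    then have "{x\<in>insert e F. v \<in> x} = insert e {x\<in>F. v \<in> x}" by auto
    then show ?thesis using f e True by (simp add: deg_def)
  next
    case False
    then have "{x\<in>insert e F. v \<in> x} = {x\<in>F. v \<in> x}" by auto
    then show ?thesis using False by (simp add: deg_def)
  qed
qed

lemma deg_single: "deg {e} v = (if v \<in> e then 1 else 0)"
  using deg_insert[of "{}" e v] by simp

lemma deg_sd_even:
  assumes "finite A" "finite B"
  shows "even (deg (sd A B) v) \<longleftrightarrow> (even (deg A v) \<longleftrightarrow> even (deg B v))"
proof -
  let ?A = "{e\<in>A. v \<in> e}" and ?B = "{e\<in>B. v \<in> e}"
  have fa: "finite ?A" "finite ?B" using assms by auto
  have eq: "{e\<in>sd A B. v \<in> e} = (?A - ?B) \<union> (?B - ?A)" unfolding sd_def by auto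
  have "card ((?A - ?B) \<union> (?B - ?A)) = card (?A - ?B) + card (?B - ?A)"
    using fa by (intro card_Un_disjoint) auto
  moreover have "card (?A - ?B) + card (?A \<inter> ?B) = card ?A" using fa
    by (subst card_Un_disjoint[symmetric]) (auto intro: arg_cong[where f=card])
  moreover have "card (?B - ?A) + card (?A \<inter> ?B) = card ?B" using fa
    by (subst card_Un_disjoint[symmetric]) (auto intro: arg_cong[where f=card])
  ultimately show ?thesis unfolding deg_def eq by presburger
qed

lemma finite_sd[simp]: "finite A \<Longrightarrow> finite B \<Longrightarrow> finite (sd A B)"
  by (simp add: sd_def)

lemma sd_mem[simp]: "x \<in> sd A B \<longleftrightarrow> (x \<in> A) \<noteq> (x \<in> B)"
  by (auto simp: sd_def)

lemma sd_subset: "sd A B \<subseteq> A \<union> B" by (auto simp: sd_def)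

lemma card_ind: "finite U \<Longrightarrow> X \<subseteq> U \<Longrightarrow> card X = (\<Sum>x\<in>U. if x \<in> X then 1 else 0)"
proof -
  assume "finite U" "X \<subseteq> U"
  then have "X = {x\<in>U. x \<in> X}" by auto
  then have "card X = (\<Sum>x\<in>{x\<in>U. x \<in> X}. 1)" by simp
  also have "\<dots> = (\<Sum>x\<in>U. if x \<in> X then 1 else 0)" using sum.inter_filter[OF \<open>finite U\<close>, of "\<lambda>_. 1::nat" "\<lambda>x. x \<in> X"] by simp
  finally show ?thesis .
qed


lemma card_seven:
  assumes "finite A" "finite B" "finite C"
  shows "card A + card B + card C + card (sd A B) + card (sd A C) + card (sd B C) + card (sd (sd A B) C)
         = 4 * card (A \<union> B \<union> C)"
proof -
  let ?U = "A \<union> B \<union> C"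
  have fU: "finite ?U" using assms by simp
  let ?i = "\<lambda>X x. if x \<in> X then 1 else (0::nat)"
  have four: "?i A x + ?i B x + ?i C x + ?i (sd A B) x + ?i (sd A C) x + ?i (sd B C) x + ?i (sd (sd A B) C) x = 4"
    if "x \<in> ?U" for x
    using that by (cases "x \<in> A"; cases "x \<in> B"; cases "x \<in> C") simp_all
  have s: "A \<subseteq> ?U" "B \<subseteq> ?U" "C \<subseteq> ?U" "sd A B \<subseteq> ?U" "sd A C \<subseteq> ?U" "sd B C \<subseteq> ?U"
    "sd (sd A B) C \<subseteq> ?U" unfolding sd_def by blast+
  have "card A + card B + card C + card (sd A B) + card (sd A C) + card (sd B C) + card (sd (sd A B) C)
     = sum (?i A) ?U + sum (?i B) ?U + sum (?i C) ?U + sum (?i (sd A B)) ?U + sum (?i (sd A C)) ?U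
       + sum (?i (sd B C)) ?U + sum (?i (sd (sd A B) C)) ?U"
    using card_ind[OF fU s(1)] card_ind[OF fU s(2)] card_ind[OF fU s(3)] card_ind[OF fU s(4)]
      card_ind[OF fU s(5)] card_ind[OF fU s(6)] card_ind[OF fU s(7)] by (simp only:)
  also have "\<dots> = (\<Sum>x\<in>?U. ?i A x + ?i B x + ?i C x + ?i (sd A B) x + ?i (sd A C) x + ?i (sd B C) x + ?i (sd (sd A B) C) x)"
    by (simp only: sum.distrib)
  also have "\<dots> = (\<Sum>x\<in>?U. 4)" by (rule sum.cong[OF refl], rule four)
  also have "\<dots> = 4 * card ?U" by simp
  finally show ?thesis .
qed



lemma cycle_len_le_card:
  assumes c: "is_cycle F cs" and f: "finite F"
  shows "length cs \<le> card F"
proof -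
  let ?n = "length cs"
  have cm: "distinct cs" "?n \<ge> 3" "\<forall>i<?n. {cs ! i, cs ! (Suc i mod ?n)} \<in> F"
    using c cycle_mod by auto
  have "inj_on (\<lambda>i. {cs ! i, cs ! (Suc i mod ?n)}) {..<?n}"
    using cyc_edge_inj[OF cm(1) cm(2)] by (auto simp: inj_on_def)
  moreover have "(\<lambda>i. {cs ! i, cs ! (Suc i mod ?n)}) ` {..<?n} \<subseteq> F" using cm(3) by auto
  ultimately have "card {..<?n} \<le> card F" using card_inj_on_le f by blast
  then show ?thesis by simp
qed

lemma walk_set_sub: "walk F xs \<Longrightarrow> length xs \<ge> 2 \<Longrightarrow> set xs \<subseteq> \<Union>F"
proof
  fix x assume w: "walk F xs" and l: "length xs \<ge> 2" and x: "x \<in> set xs"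
  then obtain i where i: "i < length xs" "xs ! i = x" by (auto simp: in_set_conv_nth)
  show "x \<in> \<Union>F"
  proof (cases "i + 1 < length xs")
    case True
    then have "{xs ! i, xs ! (i+1)} \<in> F" using w by (auto simp: walk_def)
    then show ?thesis using i by blast
  next
    case False
    have ii: "i - 1 + 1 = i" using False l i by simp
    then have "i - 1 + 1 < length xs" using i by simp
    then have "{xs ! (i - 1), xs ! (i - 1 + 1)} \<in> F" using w unfolding walk_def by blast
    moreover note ii
    ultimately show ?thesis using i by auto
  qed
qed

lemma even_cycle:
  assumes fin: "finite F" and ne: "F \<noteq> {}" and sg: "\<forall>e\<in>F. \<exists>a b. e = {a,b} \<and> a \<noteq> b"
    and ev: "\<forall>v. even (deg F v)"
  shows "\<exists>xs. is_cycle F xs \<and> length xs \<le> card F"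
proof -
  define S where "S = {xs. walk F xs \<and> distinct xs \<and> length xs \<ge> 2}"
  have "\<forall>e\<in>F. finite e" using sg by auto
  then have fU: "finite (\<Union>F)" using fin by (intro finite_Union) auto
  have "S \<subseteq> {xs. set xs \<subseteq> \<Union>F \<and> length xs \<le> card (\<Union>F)}"
  proof
    fix xs assume "xs \<in> S"
    then have "walk F xs" "distinct xs" "length xs \<ge> 2" by (auto simp: S_def)
    then have "set xs \<subseteq> \<Union>F" using walk_set_sub by blast
    moreover have "length xs \<le> card (\<Union>F)"
      using card_mono[OF fU \<open>set xs \<subseteq> \<Union>F\<close>] distinct_card[OF \<open>distinct xs\<close>] by simp
    ultimately show "xs \<in> {xs. set xs \<subseteq> \<Union>F \<and> length xs \<le> card (\<Union>F)}" by simp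
  qed
  then have fS: "finite S" by (rule finite_subset) (rule finite_lists_length_le[OF fU])
  obtain e0 where "e0 \<in> F" using ne by blast
  then obtain a0 b0 where ab0: "e0 = {a0,b0}" "a0 \<noteq> b0" using sg by meson
  then have "[a0,b0] \<in> S" using \<open>e0 \<in> F\<close> by (simp add: S_def)
  then have neS: "length ` S \<noteq> {}" by blast
  define m where "m = Max (length ` S)"
  have "m \<in> length ` S" unfolding m_def using fS neS by (intro Max_in) auto
  then obtain xs where xs: "xs \<in> S" "length xs = m" by blast
  have mx: "\<And>ys. ys \<in> S \<Longrightarrow> length ys \<le> length xs"
  proof -
    fix ys assume "ys \<in> S"
    then have "length ys \<in> length ` S" by blast
    then have "length ys \<le> m" unfolding m_def using fS by (intro Max_ge) auto
    then show "length ys \<le> length xs" using xs by simp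
  qed
  have w: "walk F xs" and d: "distinct xs" and l: "length xs \<ge> 2" using xs by (auto simp: S_def)
  let ?L = "length xs"
  define v where "v = xs ! (?L - 1)"
  define u where "u = xs ! (?L - 2)"
  have "xs \<noteq> []" using l by auto
  then have lv: "last xs = v" by (simp add: v_def last_conv_nth)
  have l2: "?L - 2 + 1 < ?L" "?L - 2 + 1 = ?L - 1" using l by simp_all
  have "{xs ! (?L-2), xs ! (?L-2+1)} \<in> F" using w l2(1) unfolding walk_def by blast
  then have uv: "{u, v} \<in> F" using l2(2) unfolding u_def v_def by simp
  have "u \<noteq> v" using d l unfolding u_def v_def by (simp add: nth_eq_iff_index_eq)
  have "{u,v} \<in> {e\<in>F. v \<in> e}" using uv by simp
  moreover have "finite {e\<in>F. v \<in> e}" using fin by simp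
  ultimately have "card {e\<in>F. v \<in> e} \<noteq> 0" by (metis card_0_eq empty_iff)
  then have "deg F v \<noteq> 0" unfolding deg_def .
  moreover have "even (deg F v)" using ev by blast
  ultimately have d2: "deg F v \<ge> 2" by presburger
  have "\<not> {e\<in>F. v \<in> e} \<subseteq> {{u,v}}"
  proof
    assume "{e\<in>F. v \<in> e} \<subseteq> {{u,v}}"
    then have "card {e\<in>F. v \<in> e} \<le> card {{u,v}}" by (rule card_mono[rotated]) simp
    then show False using d2 by (simp add: deg_def)
  qed
  then obtain e' where e': "e' \<in> F" "v \<in> e'" "e' \<noteq> {u,v}" by blast
  obtain a b where ab: "e' = {a,b}" "a \<noteq> b" using sg e'(1) by meson
  define w' where "w' = (if v = a then b else a)"
  have ew: "e' = {v, w'}" "w' \<noteq> v" using ab e'(2) w'_def by auto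
  have "w' \<noteq> u" using ew e' by auto
  have "w' \<in> set xs"
  proof (rule ccontr)
    assume nw: "w' \<notin> set xs"
    have "walk F [v, w']" using e' ew by simp
    then have "walk F (xs @ tl [v,w'])" using walk_append[OF w, of "[v,w']"] lv by simp
    then have "xs @ [w'] \<in> S" using d nw l by (simp add: S_def)
    then show False using mx by fastforce
  qed
  then obtain j where j: "j < ?L" "xs ! j = w'" by (auto simp: in_set_conv_nth)
  have "j \<noteq> ?L - 1" "j \<noteq> ?L - 2" using j \<open>w' \<noteq> v\<close> \<open>w' \<noteq> u\<close> u_def v_def by auto
  then have j3: "j + 3 \<le> ?L" using j l by linarith
  define cs where "cs = drop j xs"
  have lc: "length cs = ?L - j" by (simp add: cs_def)
  have hc: "hd cs = w'" using j by (simp add: cs_def hd_drop_conv_nth)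
  have lastc: "last cs = v" using j lv by (simp add: cs_def)
  have wc: "walk F cs" unfolding walk_def
  proof (intro conjI allI impI)
    show "cs \<noteq> []" using j by (simp add: cs_def)
    fix i assume "i + 1 < length cs"
    then have "j + i + 1 < ?L" using lc by simp
    then have "{xs ! (j+i), xs ! (j+i+1)} \<in> F" using w by (auto simp: walk_def)
    then show "{cs ! i, cs ! (i + 1)} \<in> F" using j by (simp add: cs_def add.assoc)
  qed
  have "is_cycle F cs" unfolding is_cycle_def using wc d j3 lc hc lastc e' ew
    by (auto simp: cs_def distinct_drop)
  then show ?thesis using cycle_len_le_card fin by blast
qed



lemma tree_exists:
  assumes cg: "connected_graph V H" and r: "r \<in> V"
  shows "\<exists>p d. d r = (0::nat) \<and> (\<forall>v\<in>V-{r}. p v \<in> V \<and> {v, p v} \<in> H \<and> Suc (d (p v)) = d v)"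
proof -
  define d where "d v = the_enat (gdist H v r)" for v
  have sg: "simple_graph V H" and fin: "\<And>u v. u \<in> V \<Longrightarrow> v \<in> V \<Longrightarrow> gdist H u v < \<infinity>"
    using cg by (auto simp: connected_graph_def)
  have gd: "gdist H v r = enat (d v)" if "v \<in> V" for v
    using fin[OF that r] unfolding d_def by (cases "gdist H v r") auto
  have "gdist H r r \<le> enat 0" using gdist_le[of H "[r]"] by simp
  then have d0: "d r = 0" using gd[OF r] by (simp add: zero_enat_def)
  have ex: "\<exists>w. w \<in> V \<and> {v, w} \<in> H \<and> Suc (d w) = d v" if v: "v \<in> V" "v \<noteq> r" for v
  proof -
    obtain xs where xs: "walk H xs" "hd xs = v" "last xs = r" "length xs - 1 = d v"
      using gdist_obtain[OF gd[OF v(1)]] by blast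
    obtain w rest where xw: "xs = v # w # rest"
    proof (cases xs)
      case Nil then show ?thesis using xs by (simp add: walk_def)
    next
      case (Cons x ys)
      then show ?thesis using xs v that by (cases ys) auto
    qed
    have e: "{v, w} \<in> H" and w2: "walk H (w # rest)" using xs xw by auto
    obtain a b where ab: "{v, w} = {a, b}" "a \<in> V" "b \<in> V" using sg e unfolding simple_graph_def by blast
    have "w \<in> {v, w}" by simp
    then have "w \<in> {a, b}" using ab(1) by simp
    then have wV: "w \<in> V" using ab by auto
    have lw: "last (w # rest) = r" using xs xw by simp
    have "gdist H w r \<le> enat (length (w # rest) - 1)"
      using gdist_le[OF w2] lw by simp
    then have le1: "d w + 1 \<le> d v" using gd[OF wV] xs xw by simp
    obtain ys where ys: "walk H ys" "hd ys = w" "last ys = r" "length ys - 1 = d w"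
      using gdist_obtain[OF gd[OF wV]] by blast
    have yw: "ys = w # tl ys" using ys by (cases ys) (auto simp: walk_def)
    have "walk H (w # tl ys)" using ys(1) yw by metis
    then have "walk H (v # w # tl ys)" using e by simp
    then have wv: "walk H (v # ys)" using yw by simp
    have "last (v # ys) = r" using ys yw by (metis last_ConsR list.distinct(1))
    then have "gdist H v r \<le> enat (length (v # ys) - 1)"
      using gdist_le[OF wv] by simp
    then have "enat (d v) \<le> enat (d w + 1)" using gd[OF v(1)] ys yw by simp
    then have "d v \<le> d w + 1" by simp
    then show ?thesis using le1 wV e by (intro exI[of _ w]) auto
  qed
  define p where "p v = (SOME w. w \<in> V \<and> {v, w} \<in> H \<and> Suc (d w) = d v)" for v
  have "\<forall>v\<in>V-{r}. p v \<in> V \<and> {v, p v} \<in> H \<and> Suc (d (p v)) = d v"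
  proof
    fix v assume "v \<in> V - {r}"
    then have "\<exists>w. w \<in> V \<and> {v, w} \<in> H \<and> Suc (d w) = d v" using ex by blast
    then show "p v \<in> V \<and> {v, p v} \<in> H \<and> Suc (d (p v)) = d v" unfolding p_def by (rule someI_ex)
  qed
  then show ?thesis using d0 by blast
qed

lemma tree_card:
  assumes hp: "\<forall>v\<in>V-{r}. p v \<in> V \<and> {v, p v} \<in> H \<and> Suc (d (p v)) = (d v::nat)"
    and f: "finite V" and r: "r \<in> V"
  shows "card ((\<lambda>v. {v, p v}) ` (V-{r})) = card V - 1"
proof -
  have "inj_on (\<lambda>v. {v, p v}) (V-{r})"
  proof (rule inj_onI)
    fix x y assume x: "x \<in> V - {r}" and y: "y \<in> V - {r}" and eq: "{x, p x} = {y, p y}"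
    show "x = y"
    proof (rule ccontr)
      assume "x \<noteq> y"
      then have "x = p y" "p x = y" using eq by (auto simp: doubleton_eq_iff)
      moreover have hx: "Suc (d (p x)) = d x" using hp x by blast
      moreover have hy: "Suc (d (p y)) = d y" using hp y by blast
      ultimately show False by simp
    qed
  qed
  then have "card ((\<lambda>v. {v, p v}) ` (V-{r})) = card (V - {r})" by (rule card_image)
  then show ?thesis using r f by simp
qed

lemma connected_card:
  assumes cg: "connected_graph V H" and f: "finite V" and r: "r \<in> V" and fH: "finite H"
  shows "card V - 1 \<le> card H"
proof -
  obtain p d where hp: "d r = (0::nat)" "\<forall>v\<in>V-{r}. p v \<in> V \<and> {v, p v} \<in> H \<and> Suc (d (p v)) = d v"
    using tree_exists[OF cg r] by blast
  have "(\<lambda>v. {v, p v}) ` (V-{r}) \<subseteq> H" using hp by auto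
  then have "card ((\<lambda>v. {v, p v}) ` (V-{r})) \<le> card H" using fH by (rule card_mono[rotated])
  then show ?thesis using tree_card[OF hp(2) f r] by simp
qed

fun tpath :: "(nat \<Rightarrow> nat) \<Rightarrow> nat \<Rightarrow> nat \<Rightarrow> nat set set" where
  "tpath p 0 a = {}"
| "tpath p (Suc i) a = insert {a, p a} (tpath p i (p a))"

lemma tpath_props:
  assumes hp: "\<forall>v\<in>V-{r}. p v \<in> V \<and> {v, p v} \<in> H \<and> Suc (d (p v)) = (d v::nat)"
    and r: "r \<in> V" and d0: "d r = 0"
  shows "a \<in> V \<Longrightarrow> d a = i \<Longrightarrow> tpath p i a \<subseteq> (\<lambda>v. {v, p v}) ` (V-{r}) \<and> finite (tpath p i a)
     \<and> (\<forall>e\<in>tpath p i a. \<forall>x\<in>e. x \<in> V \<and> d x \<le> i)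
     \<and> (\<forall>v. even (deg (tpath p i a) v) \<longleftrightarrow> ((v = a) \<longleftrightarrow> (v = r)))"
proof (induction i arbitrary: a)
  case 0
  have "a = r"
  proof (rule ccontr)
    assume "a \<noteq> r" then have "Suc (d (p a)) = d a" using hp 0 by auto
    then show False using 0 by simp
  qed
  then show ?case by simp
next
  case (Suc i)
  have ar: "a \<noteq> r" using Suc.prems d0 by auto
  then have pa: "p a \<in> V" "{a, p a} \<in> H" "Suc (d (p a)) = d a" using hp Suc.prems by auto
  then have dpa: "d (p a) = i" using Suc.prems by simp
  note IH = Suc.IH[OF pa(1) dpa]
  let ?S = "tpath p i (p a)"
  have nin: "{a, p a} \<notin> ?S" using IH Suc.prems by fastforce
  have apa: "a \<noteq> p a" using dpa Suc.prems by auto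
  have par: "\<forall>v. even (deg (insert {a, p a} ?S) v) \<longleftrightarrow> ((v = a) \<longleftrightarrow> (v = r))"
  proof
    fix v
    have "deg (insert {a, p a} ?S) v = deg ?S v + (if v \<in> {a, p a} then 1 else 0)"
      using deg_insert IH nin by blast
    moreover have "even (deg ?S v) \<longleftrightarrow> ((v = p a) \<longleftrightarrow> (v = r))" using IH by blast
    ultimately show "even (deg (insert {a, p a} ?S) v) \<longleftrightarrow> ((v = a) \<longleftrightarrow> (v = r))"
      using ar apa by (cases "v = a"; cases "v = p a") auto
  qed
  have "{a, p a} \<in> (\<lambda>v. {v, p v}) ` (V-{r})" using ar Suc.prems by auto
  moreover have "\<forall>e\<in>insert {a, p a} ?S. \<forall>x\<in>e. x \<in> V \<and> d x \<le> Suc i"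
    using IH Suc.prems pa dpa by fastforce
  ultimately show ?case using IH par by simp
qed

lemma cycle_mono: "is_cycle X xs \<Longrightarrow> X \<subseteq> H \<Longrightarrow> is_cycle H xs"
  unfolding is_cycle_def using walk_mono by blast



lemma few_edges:
  assumes cg: "connected_graph V H" and fV: "finite V" and r: "r \<in> V" and fH: "finite H"
    and cyc: "\<forall>xs. is_cycle H xs \<longrightarrow> k + 2 \<le> length xs"
    and big: "4 * (card V + 2) < 7 * (k + 2)"
  shows "card H \<le> card V + 1"
proof (rule ccontr)
  assume "\<not> card H \<le> card V + 1"
  then have cH: "card H \<ge> card V + 2" by simp
  have sg: "simple_graph V H" using cg by (simp add: connected_graph_def)
  obtain p d where hp0: "d r = (0::nat)" and hp: "\<forall>v\<in>V-{r}. p v \<in> V \<and> {v, p v} \<in> H \<and> Suc (d (p v)) = d v"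
    using tree_exists[OF cg r] by blast
  define T where "T = (\<lambda>v. {v, p v}) ` (V-{r})"
  have TH: "T \<subseteq> H" using hp by (auto simp: T_def)
  have cT: "card T = card V - 1" using tree_card[OF hp fV r] by (simp add: T_def)
  have cV: "card V \<ge> 1" using fV r by (metis One_nat_def Suc_leI card_gt_0_iff empty_iff)
  have fT: "finite T" using fH TH finite_subset by blast
  have "card (H - T) = card H - card T" using TH fT by (simp add: card_Diff_subset)
  then have "card (H - T) \<ge> 3" using cH cT cV by simp
  then obtain S3 where S3: "S3 \<subseteq> H - T" "card S3 = 3" by (meson obtain_subset_with_card_n)
  then obtain e1 e2 e3 where e: "S3 = {e1, e2, e3}" "e1 \<noteq> e2" "e2 \<noteq> e3" "e1 \<noteq> e3"
    by (metis card_3_iff)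
  have eH: "e1 \<in> H - T" "e2 \<in> H - T" "e3 \<in> H - T" using S3 e by auto
  define P where "P a = tpath p (d a) a" for a
  have Pp: "P a \<subseteq> T \<and> finite (P a) \<and> (\<forall>v. even (deg (P a) v) \<longleftrightarrow> ((v = a) \<longleftrightarrow> (v = r)))"
    if "a \<in> V" for a
    using tpath_props[OF hp r hp0 that refl] unfolding P_def T_def by blast
  have Zp: "\<exists>Z. finite Z \<and> Z \<subseteq> T \<union> {e} \<and> e \<in> Z \<and> (\<forall>v. even (deg Z v))" if eT: "e \<in> H - T" for e
  proof -
    obtain a b where ab: "e = {a, b}" "a \<noteq> b" "a \<in> V" "b \<in> V" using sg eT unfolding simple_graph_def by blast
    define Z where "Z = sd (sd (P a) (P b)) {e}"
    have fa: "finite (P a)" "finite (P b)" using Pp ab by auto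
    have "finite Z" using fa by (simp add: Z_def)
    moreover have "Z \<subseteq> T \<union> {e}" using Pp[OF ab(3)] Pp[OF ab(4)] unfolding Z_def sd_def by blast
    moreover have "e \<in> Z" using Pp[OF ab(3)] Pp[OF ab(4)] eT unfolding Z_def by auto
    moreover have "\<forall>v. even (deg Z v)"
    proof
      fix v
      have "even (deg Z v) \<longleftrightarrow> ((even (deg (P a) v) \<longleftrightarrow> even (deg (P b) v)) \<longleftrightarrow> even (deg {e} v))"
        unfolding Z_def using fa by (simp add: deg_sd_even)
      moreover have "even (deg (P a) v) \<longleftrightarrow> ((v = a) \<longleftrightarrow> (v = r))" using Pp[OF ab(3)] by blast
      moreover have "even (deg (P b) v) \<longleftrightarrow> ((v = b) \<longleftrightarrow> (v = r))" using Pp[OF ab(4)] by blast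
      moreover have "even (deg {e} v) \<longleftrightarrow> v \<notin> {a, b}" using ab(1) by (simp add: deg_single)
      ultimately show "even (deg Z v)" using ab(2) by (cases "v = a"; cases "v = b") auto
    qed
    ultimately show ?thesis by blast
  qed
  from Zp[OF eH(1)] obtain Z1 where Z1: "finite Z1" "Z1 \<subseteq> T \<union> {e1}" "e1 \<in> Z1" "\<forall>v. even (deg Z1 v)" by blast
  from Zp[OF eH(2)] obtain Z2 where Z2: "finite Z2" "Z2 \<subseteq> T \<union> {e2}" "e2 \<in> Z2" "\<forall>v. even (deg Z2 v)" by blast
  from Zp[OF eH(3)] obtain Z3 where Z3: "finite Z3" "Z3 \<subseteq> T \<union> {e3}" "e3 \<in> Z3" "\<forall>v. even (deg Z3 v)" by blast
  have lb: "k + 2 \<le> card X" if X: "X \<subseteq> H" "finite X" "X \<noteq> {}" "\<forall>v. even (deg X v)" for X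
  proof -
    have sgX: "\<forall>e\<in>X. \<exists>a b. e = {a,b} \<and> a \<noteq> b"
    proof
      fix e assume "e \<in> X"
      then have "e \<in> H" using X(1) by blast
      then obtain a b where "e = {a,b}" "a \<noteq> b" using sg unfolding simple_graph_def by meson
      then show "\<exists>a b. e = {a,b} \<and> a \<noteq> b" by blast
    qed
    obtain xs where xs: "is_cycle X xs" "length xs \<le> card X"
      using even_cycle[OF X(2) X(3) sgX X(4)] by blast
    have "is_cycle H xs" using cycle_mono[OF xs(1) X(1)] .
    then have "k + 2 \<le> length xs" using cyc by blast
    then show ?thesis using xs(2) by linarith
  qed
  have nin: "e2 \<notin> Z1" "e3 \<notin> Z1" "e1 \<notin> Z2" "e3 \<notin> Z2" "e1 \<notin> Z3" "e2 \<notin> Z3"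
    using Z1 Z2 Z3 eH e by auto
  have sub: "Z1 \<subseteq> H" "Z2 \<subseteq> H" "Z3 \<subseteq> H" using Z1 Z2 Z3 TH eH by auto
  have evs: "\<forall>v. even (deg (sd Z1 Z2) v)" "\<forall>v. even (deg (sd Z1 Z3) v)" "\<forall>v. even (deg (sd Z2 Z3) v)"
    "\<forall>v. even (deg (sd (sd Z1 Z2) Z3) v)"
    using Z1 Z2 Z3 by (simp_all add: deg_sd_even)
  have c1: "k + 2 \<le> card Z1" using lb[OF sub(1) Z1(1)] Z1 by blast
  have c2: "k + 2 \<le> card Z2" using lb[OF sub(2) Z2(1)] Z2 by blast
  have c3: "k + 2 \<le> card Z3" using lb[OF sub(3) Z3(1)] Z3 by blast
  have s4: "sd Z1 Z2 \<subseteq> H" "sd Z1 Z3 \<subseteq> H" "sd Z2 Z3 \<subseteq> H" "sd (sd Z1 Z2) Z3 \<subseteq> H"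
    using sub unfolding sd_def by blast+
  have m4: "e1 \<in> sd Z1 Z2" "e1 \<in> sd Z1 Z3" "e2 \<in> sd Z2 Z3" "e1 \<in> sd (sd Z1 Z2) Z3"
    using Z1 Z2 Z3 nin by simp_all
  have c4: "k + 2 \<le> card (sd Z1 Z2)"
    by (rule lb[OF s4(1) finite_sd[OF Z1(1) Z2(1)] _ evs(1)]) (use m4 in blast)
  have c5: "k + 2 \<le> card (sd Z1 Z3)"
    by (rule lb[OF s4(2) finite_sd[OF Z1(1) Z3(1)] _ evs(2)]) (use m4 in blast)
  have c6: "k + 2 \<le> card (sd Z2 Z3)"
    by (rule lb[OF s4(3) finite_sd[OF Z2(1) Z3(1)] _ evs(3)]) (use m4 in blast)
  have c7: "k + 2 \<le> card (sd (sd Z1 Z2) Z3)"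
    by (rule lb[OF s4(4) finite_sd[OF finite_sd[OF Z1(1) Z2(1)] Z3(1)] _ evs(4)]) (use m4 in blast)
  have U: "Z1 \<union> Z2 \<union> Z3 \<subseteq> T \<union> {e1, e2, e3}" using Z1 Z2 Z3 by blast
  have "card (Z1 \<union> Z2 \<union> Z3) \<le> card (T \<union> {e1, e2, e3})" using U fT by (intro card_mono) auto
  also have "\<dots> \<le> card T + card {e1, e2, e3}" by (rule card_Un_le)
  also have "\<dots> \<le> card V + 2"
  proof -
    have "card {e1, e2, e3} = 3" using e by simp
    then show ?thesis using cT cV by linarith
  qed
  finally have cu: "card (Z1 \<union> Z2 \<union> Z3) \<le> card V + 2" .
  have "7 * (k + 2) \<le> 4 * card (Z1 \<union> Z2 \<union> Z3)"
    using card_seven[OF Z1(1) Z2(1) Z3(1)] c1 c2 c3 c4 c5 c6 c7 by (simp only: add_mult_distrib2 mult.commute[of 4])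
  then show False using cu big by (simp add: algebra_simps)
qed



lemma spanner_connected:
  assumes cg: "connected_graph V E" and sp: "is_spanner V E k H"
  shows "connected_graph V H"
  unfolding connected_graph_def
proof (intro conjI ballI)
  have "H \<subseteq> E" using sp by (simp add: is_spanner_def)
  then show "simple_graph V H" using cg unfolding connected_graph_def simple_graph_def by (meson subsetD)
  fix u v assume u: "u \<in> V" and v: "v \<in> V"
  have "gdist E u v < \<infinity>" using cg u v unfolding connected_graph_def by blast
  then obtain d where d: "gdist E u v = enat d" using gdist_fin by blast
  have "gdist H u v \<le> enat k * gdist E u v" using sp u v by (simp add: is_spanner_def)
  also have "\<dots> = enat (k * d)" using d by simp
  finally have "gdist H u v \<le> enat (k * d)" .
  then show "gdist H u v < \<infinity>" by (cases "gdist H u v") auto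
qed

lemma finite_graph: "simple_graph V E \<Longrightarrow> finite V \<Longrightarrow> finite E"
proof -
  assume sg: "simple_graph V E" and f: "finite V"
  have "E \<subseteq> Pow V"
  proof
    fix e assume "e \<in> E"
    then obtain u v where "e = {u,v}" "u \<in> V" "v \<in> V" using sg unfolding simple_graph_def by meson
    then show "e \<in> Pow V" by simp
  qed
  then show "finite E" using f finite_subset by blast
qed

lemma no_cycle_empty: "\<not> is_cycle {} xs"
proof
  assume "is_cycle {} xs"
  then have "walk {} xs" "length xs \<ge> 3" by (auto simp: is_cycle_def)
  moreover have "0 + 1 < length xs" using \<open>length xs \<ge> 3\<close> by simp
  ultimately show False unfolding walk_def by blast
qed

lemma main_good:
  assumes n1: "n \<ge> 1" and kb: "4 * n < 7 * k"
  shows "approx_good 2 3 n k"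
  unfolding approx_good_def
proof (intro allI impI)
  fix E assume cg: "connected_graph {0..<n} E"
  let ?V = "{0..<n::nat}"
  have k1: "k \<ge> 1" using kb n1 by linarith
  have sgE: "simple_graph ?V E" using cg by (simp add: connected_graph_def)
  have fE: "finite E" using finite_graph[OF sgE] by simp
  define M where "M = {H. H \<subseteq> E \<and> (\<forall>xs. is_cycle H xs \<longrightarrow> k + 2 \<le> length xs)}"
  have "M \<subseteq> Pow E" by (auto simp: M_def)
  then have fM: "finite M" using fE by (simp add: finite_subset)
  have "{} \<in> M" unfolding M_def using no_cycle_empty by blast
  then obtain H where HM: "H \<in> M" and Hmax: "\<forall>b\<in>M. H \<le> b \<longrightarrow> H = b"
    using finite_has_maximal[OF fM] by blast
  have HE: "H \<subseteq> E" and Hcyc: "\<forall>xs. is_cycle H xs \<longrightarrow> k + 2 \<le> length xs" using HM by (auto simp: M_def)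
  have Hsp: "gdist H u v \<le> enat k" if uv: "{u,v} \<in> E" for u v
  proof (cases "{u,v} \<in> H")
    case True
    then have "walk H [u,v]" by simp
    then have "gdist H u v \<le> enat 1" using gdist_le[of H "[u,v]"] by simp
    also have "\<dots> \<le> enat k" using k1 by simp
    finally show ?thesis .
  next
    case False
    have "insert {u,v} H \<notin> M" using Hmax False by blast
    moreover have "insert {u,v} H \<subseteq> E" using HE uv by blast
    ultimately obtain xs where xs: "is_cycle (insert {u,v} H) xs" "\<not> k + 2 \<le> length xs"
      unfolding M_def by blast
    have "\<not> is_cycle H xs" using Hcyc xs by blast
    from cycle_extract[OF xs(1) this] obtain ys where ys: "walk H ys" "{hd ys, last ys} = {u,v}"
      "length ys = length xs" by blast
    have lk: "length ys - 1 \<le> k" using ys(3) xs(2) by simp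
    have "gdist H (hd ys) (last ys) \<le> enat (length ys - 1)" by (rule gdist_le[OF ys(1)])
    also have "\<dots> \<le> enat k" using lk by simp
    finally have g: "gdist H (hd ys) (last ys) \<le> enat k" .
    show ?thesis
    proof (cases "hd ys = u")
      case True
      then have "last ys = v" using ys(2) by (auto simp: doubleton_eq_iff)
      then show ?thesis using g True by simp
    next
      case False
      then have "hd ys = v" "last ys = u" using ys(2) by (auto simp: doubleton_eq_iff)
      then show ?thesis using g gdist_sym[of H u v] by simp
    qed
  qed
  have spH: "is_spanner ?V E k H" by (rule spanner_crit[OF HE k1 Hsp])
  have gH: "enat (k + 2) \<le> girth H"
    unfolding girth_def using Hcyc by (auto intro!: Inf_greatest)
  have cH: "connected_graph ?V H" using spanner_connected[OF cg spH] .
  have fH: "finite H" using fE HE finite_subset by blast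
  have r: "0 \<in> ?V" using n1 by simp
  have big: "4 * (card ?V + 2) < 7 * (k + 2)" using kb by simp
  have cardH: "card H \<le> n + 1" using few_edges[OF cH _ r fH Hcyc big] by simp
  let ?SP = "{H. is_spanner ?V E k H}"
  have "?SP \<subseteq> Pow E" by (auto simp: is_spanner_def)
  then have "finite ?SP" using fE by (simp add: finite_subset)
  then have fSP: "finite (card ` ?SP)" by simp
  have "card H \<in> card ` ?SP" using spH by blast
  then have "OPT ?V E k \<in> card ` ?SP" unfolding OPT_def using fSP by (intro Min_in) auto
  then obtain H' where H': "is_spanner ?V E k H'" "card H' = OPT ?V E k" by (auto elim!: imageE)
  have "H' \<subseteq> E" using H'(1) by (simp add: is_spanner_def)
  then have "finite H'" using fE by (simp add: finite_subset)
  then have "card ?V - 1 \<le> card H'" using connected_card[OF spanner_connected[OF cg H'(1)] _ r] by simp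
  then have opt: "n - 1 \<le> OPT ?V E k" using H' by simp
  have "real (card H) - real n \<le> 2 * (real (OPT ?V E k) - real n) + 3"
  proof -
    have a: "real (card H) \<le> real n + 1" using cardH by linarith
    have "real (n - 1) \<le> real (OPT ?V E k)" using opt by linarith
    then have b: "real n - 1 \<le> real (OPT ?V E k)" using n1 by (simp add: of_nat_diff)
    show ?thesis using a b by argo
  qed
  then show "\<exists>H. is_spanner ?V E k H \<and> enat (k + 2) \<le> girth H \<and>
      real (card H) - real n \<le> 2 * (real (OPT ?V E k) - real n) + 3"
    using spH gH by blast
qed

theorem corollary1p13:
  shows "\<exists>c \<beta> :: real. c \<ge> 0 \<and> \<beta> \<ge> 0 \<and>
    (\<exists>N. \<forall>n \<ge> N. \<forall>k :: nat. real k > 4 / 7 * real n + c \<longrightarrow> approx_good 2 \<beta> n k)"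
proof (intro exI conjI)
  show "(0::real) \<ge> 0" by simp
  show "(3::real) \<ge> 0" by simp
  show "\<forall>n \<ge> 1. \<forall>k :: nat. real k > 4 / 7 * real n + 0 \<longrightarrow> approx_good 2 3 n k"
  proof (intro allI impI)
    fix n k :: nat assume n: "n \<ge> 1" and "real k > 4 / 7 * real n + 0"
    then have "real (4 * n) < real (7 * k)" by simp
    then have "4 * n < 7 * k" by linarith
    then show "approx_good 2 3 n k" using main_good n by blast
  qed
qed

end
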